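(* Let $\gamma$ be a non-collision orbit of the regularized planar two-center problem lying on a regular torus of type L or type S with rotation number $W$, and let $n=\lfloor W\rfloor$. Then in the syzygy sequence of $\gamma$, every maximal block of consecutive symbols 3 lying between two symbols from $\{1,2\}$ has length either $n$ or $n+1$.
   Context: Fix $d>0$ and masses $m_1,m_2>0$ at $(-d,0)$ and $(d,0)$. A test particle moves with Hamiltonian $H=\tfrac12(p_x^2+p_y^2)-m_1/\sqrt{(x+d)^2+y^2}-m_2/\sqrt{(x-d)^2+y^2}$; energies $h<0$. Regularization: $(\lambda,\nu)\in\mathbb{R}\times(\mathbb{R}/2\pi\mathbb{Z})$ with $x+iy=d\sin(\nu+i\lambda)$, i.e. $(x,y)=(d\cosh\lambda\sin\nu,\ d\sinh\lambda\cos\nu)$, conjugate momenta $p_\lambda,p_\nu$, time change $dt=d^2(\cosh^2\lambda-\sin^2\nu)\,d\tau$. On $H=h$ the motion becomes the flow (time $\tau$) of $H_\lambda+H_\nu$ on its zero level, $H_\lambda=\tfrac12p_\lambda^2-d(m_1+m_2)\cosh\lambda-hd^2\cosh^2\lambda$, $H_\nu=\tfrac12p_\nu^2+d(m_1-m_2)\sin\nu+hd^2\sin^2\nu$; orbits lie in sets $\{H_\lambda=-g,\ H_\nu=g\}$ for a separation constant $g$. Regular torus: a compact connected component $\mathbb{T}=C_\lambda\times C_\nu$ of such a set with $-g$ a regular value of $H_\lambda$ and $g$ a regular value of $H_\nu$ ($C_\lambda$ a closed curve in the $(\lambda,p_\lambda)$-plane, $C_\nu$ a closed curve in the cylinder $(\mathbb{R}/2\pi\mathbb{Z})\times\mathbb{R}$).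 Type S: $C_\nu$ contractible in the cylinder; type L: $C_\nu$ winds around the cylinder and $C_\lambda$ meets $\{\lambda=0\}$. Rotation number $W=T_\nu/T_\lambda$, where $T_\lambda,T_\nu$ are the $\tau$-periods of the motions on $C_\lambda$, $C_\nu$. Syzygy symbols: 3 when $\lambda=0$, $\nu\not\equiv\pm\pi/2$; 1 when $\nu\equiv-\pi/2$, $\lambda\ne0$; 2 when $\nu\equiv\pi/2$, $\lambda\ne0$ (the crossings of the particle with the $x$-axis between the centers, on $x<-d$, on $x>d$). Collision points: $\lambda=0$, $\nu\equiv\pm\pi/2$. A non-collision orbit is an orbit of the regularized flow on a regular torus with no collision point; its syzygy sequence is the bi-infinite sequence of symbols in time order. *)

theory Defs
  imports "HOL-Analysis.Analysis"
begin

text \<open>Phase coordinates: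
  (lambda, p_lambda) in the plane R x R; (nu, p_nu) with nu lifted to R,
  the cylinder (R/2piZ) x R being realised as the subset range cyl of R^3.\<close>

definition Hlam :: "real \<Rightarrow> real \<Rightarrow> real \<Rightarrow> real \<Rightarrow> real \<times> real \<Rightarrow> real" where
  "Hlam d m1 m2 h z = (case z of (l, p) \<Rightarrow>
      p\<^sup>2 / 2 - d * (m1 + m2) * cosh l - h * d\<^sup>2 * (cosh l)\<^sup>2)"

definition Hnu :: "real \<Rightarrow> real \<Rightarrow> real \<Rightarrow> real \<Rightarrow> real \<times> real \<Rightarrow> real" where
  "Hnu d m1 m2 h z = (case z of (v, p) \<Rightarrow>
      p\<^sup>2 / 2 + d * (m1 - m2) * sin v + h * d\<^sup>2 * (sin v)\<^sup>2)"

definition cyl :: "real \<times> real \<Rightarrow> real \<times> real \<times> real" where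
  "cyl z = (case z of (v, p) \<Rightarrow> (cos v, sin v, p))"

definition Cylinder :: "(real \<times> real \<times> real) set" where
  "Cylinder = range cyl"

definition regular_value :: "(real \<times> real \<Rightarrow> real) \<Rightarrow> real \<Rightarrow> bool" where
  "regular_value f c \<longleftrightarrow>
     (\<forall>x. f x = c \<longrightarrow> (\<exists>D. (f has_derivative D) (at x) \<and> D \<noteq> (\<lambda>_. 0)))"

definition Clam :: "real \<Rightarrow> real \<Rightarrow> real \<Rightarrow> real \<Rightarrow> real \<Rightarrow> real \<times> real \<Rightarrow> (real \<times> real) set" where
  "Clam d m1 m2 h g z = connected_component_set {x. Hlam d m1 m2 h x = - g} z"

definition Cnu :: "real \<Rightarrow> real \<Rightarrow> real \<Rightarrow> real \<Rightarrow> real \<Rightarrow> real \<times> real \<Rightarrow> (real \<times> real \<times> real) set" where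
  "Cnu d m1 m2 h g w = connected_component_set (cyl ` {x. Hnu d m1 m2 h x = g}) (cyl w)"

definition regular_torus :: "real \<Rightarrow> real \<Rightarrow> real \<Rightarrow> real \<Rightarrow> real \<Rightarrow> real \<times> real \<Rightarrow> real \<times> real \<Rightarrow> bool" where
  "regular_torus d m1 m2 h g z w \<longleftrightarrow>
     Hlam d m1 m2 h z = - g \<and> Hnu d m1 m2 h w = g \<and>
     compact (Clam d m1 m2 h g z \<times> Cnu d m1 m2 h g w) \<and>
     regular_value (Hlam d m1 m2 h) (- g) \<and> regular_value (Hnu d m1 m2 h) g"

definition contractible_in_cylinder :: "(real \<times> real \<times> real) set \<Rightarrow> bool" where
  "contractible_in_cylinder C \<longleftrightarrow>
     (\<exists>c. homotopic_with_canon (\<lambda>_. True) C Cylinder id (\<lambda>_. c))"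

definition torus_type_S :: "real \<Rightarrow> real \<Rightarrow> real \<Rightarrow> real \<Rightarrow> real \<Rightarrow> real \<times> real \<Rightarrow> real \<times> real \<Rightarrow> bool" where
  "torus_type_S d m1 m2 h g z w \<longleftrightarrow> contractible_in_cylinder (Cnu d m1 m2 h g w)"

definition torus_type_L :: "real \<Rightarrow> real \<Rightarrow> real \<Rightarrow> real \<Rightarrow> real \<Rightarrow> real \<times> real \<Rightarrow> real \<times> real \<Rightarrow> bool" where
  "torus_type_L d m1 m2 h g z w \<longleftrightarrow>
     \<not> contractible_in_cylinder (Cnu d m1 m2 h g w) \<and> (\<exists>p. (0, p) \<in> Clam d m1 m2 h g z)"

text \<open>Orbit (time tau) of the Hamiltonian flow of H_lambda + H_nu, nu lifted to R.\<close>
definition regularized_orbit ::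
  "real \<Rightarrow> real \<Rightarrow> real \<Rightarrow> real \<Rightarrow> (real \<Rightarrow> real) \<Rightarrow> (real \<Rightarrow> real) \<Rightarrow> (real \<Rightarrow> real) \<Rightarrow> (real \<Rightarrow> real) \<Rightarrow> bool" where
  "regularized_orbit d m1 m2 h lam plam nu pnu \<longleftrightarrow>
     (\<forall>t. (lam has_real_derivative plam t) (at t) \<and>
          (plam has_real_derivative
             (d * (m1 + m2) * sinh (lam t) + 2 * h * d\<^sup>2 * cosh (lam t) * sinh (lam t))) (at t) \<and>
          (nu has_real_derivative pnu t) (at t) \<and>
          (pnu has_real_derivative
             (- (d * (m1 - m2) * cos (nu t) + 2 * h * d\<^sup>2 * sin (nu t) * cos (nu t)))) (at t))"

definition Tlam :: "(real \<Rightarrow> real) \<Rightarrow> (real \<Rightarrow> real) \<Rightarrow> real" where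
  "Tlam lam plam = Inf {T. T > 0 \<and> (\<forall>t. lam (t + T) = lam t \<and> plam (t + T) = plam t)}"

definition Tnu :: "(real \<Rightarrow> real) \<Rightarrow> (real \<Rightarrow> real) \<Rightarrow> real" where
  "Tnu nu pnu = Inf {T. T > 0 \<and> (\<forall>t. cyl (nu (t + T), pnu (t + T)) = cyl (nu t, pnu t))}"

definition rotation_number :: "(real \<Rightarrow> real) \<Rightarrow> (real \<Rightarrow> real) \<Rightarrow> (real \<Rightarrow> real) \<Rightarrow> (real \<Rightarrow> real) \<Rightarrow> real" where
  "rotation_number lam plam nu pnu = Tnu nu pnu / Tlam lam plam"

text \<open>Collision points: lambda = 0 and nu = +-pi/2 mod 2pi (i.e. cos nu = 0).\<close>
definition non_collision :: "(real \<Rightarrow> real) \<Rightarrow> (real \<Rightarrow> real) \<Rightarrow> bool" where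
  "non_collision lam nu \<longleftrightarrow> (\<forall>t. \<not> (lam t = 0 \<and> cos (nu t) = 0))"

text \<open>Syzygy symbol at time t (None if no syzygy at t).
  nu = -pi/2 mod 2pi iff sin nu = -1; nu = pi/2 mod 2pi iff sin nu = 1.\<close>
definition syzygy :: "(real \<Rightarrow> real) \<Rightarrow> (real \<Rightarrow> real) \<Rightarrow> real \<Rightarrow> nat option" where
  "syzygy lam nu t =
     (if lam t = 0 \<and> cos (nu t) \<noteq> 0 then Some 3
      else if lam t \<noteq> 0 \<and> sin (nu t) = -1 then Some 1
      else if lam t \<noteq> 0 \<and> sin (nu t) = 1 then Some 2
      else None)"

end

theory Submission
  imports Defs
begin



lemma ode_unique:
  fixes F :: "real \<Rightarrow> real" and xa pa xb pb :: "real \<Rightarrow> real" and K tz t :: real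
  assumes d1: "\<And>t. (xa has_real_derivative pa t) (at t)" "\<And>t. (pa has_real_derivative F (xa t)) (at t)"
    and d2: "\<And>t. (xb has_real_derivative pb t) (at t)" "\<And>t. (pb has_real_derivative F (xb t)) (at t)"
    and lip: "\<And>t. \<bar>F (xa t) - F (xb t)\<bar> \<le> K * \<bar>xa t - xb t\<bar>" and K: "K \<ge> 0"
    and init: "xa tz = xb tz" "pa tz = pb tz"
  shows "xa t = xb t \<and> pa t = pb t"
proof -
  define u where "u t = (xa t - xb t)^2 + (pa t - pb t)^2" for t
  define C where "C = 1 + K"
  define u' where "u' t = 2*(xa t - xb t)*(pa t - pb t) + 2*(pa t - pb t)*(F (xa t) - F (xb t))" for t
  have du: "(u has_real_derivative u' t) (at t)" for t
    unfolding u_def u'_def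
    by (rule derivative_eq_intros d1 d2 refl | simp)+ (simp add: algebra_simps)
  have bd: "\<bar>u' t\<bar> \<le> C * u t" for t
  proof -
    define a where "a = xa t - xb t"
    define b where "b = pa t - pb t"
    have ab: "\<bar>2*a*b\<bar> \<le> a^2 + b^2"
    proof -
      have "0 \<le> (\<bar>a\<bar> - \<bar>b\<bar>)^2" by simp
      then show ?thesis by (simp add: power2_eq_square abs_mult algebra_simps)
    qed
    have "\<bar>2*b*(F (xa t) - F (xb t))\<bar> \<le> 2*\<bar>b\<bar>*(K*\<bar>a\<bar>)"
      using lip[of t] unfolding a_def by (simp add: abs_mult mult_left_mono)
    also have "\<dots> = K * \<bar>2*a*b\<bar>" by (simp add: abs_mult)
    also have "\<dots> \<le> K * (a^2+b^2)" using ab K by (rule mult_left_mono)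
    finally have "\<bar>2*b*(F (xa t) - F (xb t))\<bar> \<le> K * (a^2+b^2)" .
    moreover have "u' t = 2*a*b + 2*b*(F (xa t) - F (xb t))" "u t = a^2+b^2"
      unfolding u'_def u_def a_def b_def by simp_all
    ultimately show ?thesis unfolding C_def
    proof -
      assume h1: "\<bar>2*b*(F (xa t) - F (xb t))\<bar> \<le> K * (a^2+b^2)"
        and h2: "u' t = 2*a*b + 2*b*(F (xa t) - F (xb t))" "u t = a^2+b^2"
      have "\<bar>u' t\<bar> \<le> \<bar>2*a*b\<bar> + \<bar>2*b*(F (xa t) - F (xb t))\<bar>"
        unfolding h2 by (rule abs_triangle_ineq)
      also have "\<dots> \<le> (a^2+b^2) + K*(a^2+b^2)" using ab h1 by linarith
      finally show "\<bar>u' t\<bar> \<le> (1+K) * u t" unfolding h2 by (simp add: algebra_simps)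
    qed
  qed
  have u0: "u tz = 0" using init by (simp add: u_def)
  have upos: "u s \<ge> 0" for s by (simp add: u_def)
  have "u t = 0"
  proof (cases "tz \<le> t")
    case True
    define w where "w s = u s * exp (- C * s)" for s
    have "w t \<le> w tz"
    proof (rule DERIV_nonpos_imp_nonincreasing[OF True])
      fix s show "\<exists>y. DERIV w s :> y \<and> y \<le> 0"
      proof (intro exI conjI)
        show "DERIV w s :> (u' s - C * u s) * exp (- C * s)"
          unfolding w_def by (rule derivative_eq_intros du refl | simp)+ (simp add: algebra_simps)
        show "(u' s - C * u s) * exp (- C * s) \<le> 0"
          using bd[of s] by (intro mult_nonpos_nonneg) auto
      qed
    qed
    then have "u t * exp (- C * t) \<le> 0" using u0 by (simp add: w_def)
    then show ?thesis using upos[of t] by (simp add: mult_le_0_iff)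
  next
    case False
    then have le: "t \<le> tz" by simp
    define w where "w s = u s * exp (C * s)" for s
    have "w t \<le> w tz"
    proof (rule DERIV_nonneg_imp_nondecreasing[OF le])
      fix s show "\<exists>y. DERIV w s :> y \<and> y \<ge> 0"
      proof (intro exI conjI)
        show "DERIV w s :> (u' s + C * u s) * exp (C * s)"
          unfolding w_def by (rule derivative_eq_intros du refl | simp)+ (simp add: algebra_simps)
        show "(u' s + C * u s) * exp (C * s) \<ge> 0"
          using bd[of s] by (intro mult_nonneg_nonneg) auto
      qed
    qed
    then have "u t * exp (C * t) \<le> 0" using u0 by (simp add: w_def)
    then show ?thesis using upos[of t] by (simp add: mult_le_0_iff)
  qed
  then show ?thesis unfolding u_def
    by (simp add: sum_power2_eq_zero_iff)
qed



lemma cont_eps: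
  fixes f :: "real \<Rightarrow> real"
  assumes "isCont f x" "e > 0"
  obtains d where "d > 0" "\<And>y. \<bar>y - x\<bar> < d \<Longrightarrow> \<bar>f y - f x\<bar> < e"
proof -
  from assms obtain d where d: "d > 0" "\<forall>y. y \<noteq> x \<and> \<bar>y - x\<bar> < d \<longrightarrow> \<bar>f y - f x\<bar> < e"
    unfolding isCont_def LIM_eq by (auto simp: dist_real_def)
  have "\<bar>f y - f x\<bar> < e" if "\<bar>y - x\<bar> < d" for y
    using d that assms(2) by (cases "y = x") auto
  then show ?thesis using d(1) that by blast
qed

lemma return_lemma:
  fixes F V lam plam :: "real \<Rightarrow> real" and E M P s0 :: real
  assumes der: "\<And>t. (lam has_real_derivative plam t) (at t)"
      "\<And>t. (plam has_real_derivative F (lam t)) (at t)"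
    and en: "\<And>t. (plam t)^2/2 + V (lam t) = E"
    and bl: "\<And>t. lam t \<le> M" and bp: "\<And>t. plam t \<le> P"
    and cF: "\<And>x. isCont F x" and cV: "\<And>x. isCont V x"
    and reg: "\<And>x. V x = E \<Longrightarrow> F x \<noteq> 0"
    and p0: "plam s0 > 0"
  shows "\<exists>r>s0. plam r = 0"
proof (rule ccontr)
  assume nz: "\<not> (\<exists>r>s0. plam r = 0)"
  have contp: "continuous_on S plam" for S
    using der(2) by (meson DERIV_continuous continuous_at_imp_continuous_on)
  have contl: "continuous_on S lam" for S
    using der(1) by (meson DERIV_continuous continuous_at_imp_continuous_on)
  have ppos: "plam t > 0" if ts: "t \<ge> s0" for t
  proof (rule ccontr)
    assume "\<not> plam t > 0"
    then have "plam t \<le> 0" by simp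
    then obtain x where "s0 \<le> x" "x \<le> t" "plam x = 0"
      using IVT2'[of plam t 0 s0] ts contp p0 by auto
    then show False using nz p0 by (cases "x = s0") auto
  qed
  have mono: "lam x \<le> lam y" if "s0 \<le> x" "x \<le> y" for x y
    using DERIV_nonneg_imp_nondecreasing[OF that(2), of lam] der(1) ppos that
    by (meson less_imp_le order_trans)
  define L where "L = Sup (lam ` {s0..})"
  have ne: "lam ` {s0..} \<noteq> {}" by auto
  have bdd: "bdd_above (lam ` {s0..})" using bl by (intro bdd_aboveI[of _ M]) auto
  have leL: "lam t \<le> L" if "t \<ge> s0" for t
    unfolding L_def using bdd that by (auto intro: cSUP_upper)
  have close: "\<exists>T\<ge>s0. \<forall>t\<ge>T. L - e < lam t \<and> lam t \<le> L" if "e > 0" for e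
  proof -
    have "L - e < Sup (lam ` {s0..})" using that L_def by simp
    then obtain y where "y \<in> lam ` {s0..}" "L - e < y" by (rule less_cSupE[OF _ ne])
    then obtain T where T: "T \<ge> s0" "L - e < lam T" by auto
    show ?thesis using T mono leL by (intro exI[of _ T]) (auto intro: less_le_trans)
  qed
  have VL: "V L = E"
  proof (rule ccontr)
    assume ne: "V L \<noteq> E"
    define e where "e = \<bar>V L - E\<bar> / 4"
    have e: "e > 0" using ne by (simp add: e_def)
    obtain d1 where d1: "d1 > 0" "\<And>y. \<bar>y - L\<bar> < d1 \<Longrightarrow> \<bar>V y - V L\<bar> < e"
      using cont_eps[OF cV[of L] e] by blast
    define \<eta> where "\<eta> = min d1 (min e 1)"
    have eta: "\<eta> > 0" using d1 e by (simp add: \<eta>_def)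
    obtain T where T: "T \<ge> s0" "\<And>t. t \<ge> T \<Longrightarrow> L - \<eta> < lam t \<and> lam t \<le> L"
      using close[OF eta] by auto
    obtain \<xi> where xi: "T < \<xi>" "\<xi> < T + 1" "lam (T+1) - lam T = (T + 1 - T) * plam \<xi>"
      using MVT2[of T "T+1" lam plam] der(1) by auto
    have pxi: "0 < plam \<xi>" "plam \<xi> < \<eta>"
      using ppos[of \<xi>] T(1) xi(1) T(2)[of T] T(2)[of "T+1"] xi(3) by auto
    have p2: "(plam \<xi>)^2/2 \<le> e"
    proof -
      have "\<eta> \<le> 1" by (simp add: \<eta>_def)
      then have "(plam \<xi>)^2 \<le> plam \<xi> * 1" using pxi unfolding power2_eq_square
        by (intro mult_left_mono) (auto simp: \<eta>_def)
      then show ?thesis using pxi unfolding \<eta>_def by auto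
    qed
    have "\<bar>V (lam \<xi>) - V L\<bar> < e"
      using d1(2)[of "lam \<xi>"] T(2)[of \<xi>] xi(1) unfolding \<eta>_def by auto
    moreover have "(plam \<xi>)^2/2 \<ge> 0" by simp
    ultimately have "\<bar>E - V L\<bar> < 2 * e" using en[of \<xi>] p2 by linarith
    then show False using e unfolding e_def by (simp add: abs_minus_commute)
  qed
  have FL: "F L \<noteq> 0" using reg[OF VL] .
  define e where "e = \<bar>F L\<bar> / 2"
  have e: "e > 0" using FL by (simp add: e_def)
  obtain d1 where d1: "d1 > 0" "\<And>y. \<bar>y - L\<bar> < d1 \<Longrightarrow> \<bar>F y - F L\<bar> < e"
    using cont_eps[OF cF[of L] e] by blast
  obtain T where T: "T \<ge> s0" "\<And>t. t \<ge> T \<Longrightarrow> L - d1 < lam t \<and> lam t \<le> L"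
    using close[OF d1(1)] by auto
  have Fnear: "\<bar>F (lam t) - F L\<bar> < e" if "t \<ge> T" for t
    using d1(2)[of "lam t"] T(2)[OF that] by auto
  show False
  proof (cases "F L > 0")
    case True
    define t where "t = T + (P - plam T + 1) / e"
    have tT: "t \<ge> T"
    proof -
      have "P - plam T \<ge> 0" using bp[of T] by simp
      then show ?thesis unfolding t_def using e by simp
    qed
    have "plam T + e * (t - T) \<le> plam t"
    proof -
      have "(\<lambda>s. plam s - e * s) T \<le> (\<lambda>s. plam s - e * s) t"
      proof (rule DERIV_nonneg_imp_nondecreasing[OF tT])
        fix x assume "T \<le> x" "x \<le> t"
        then have "\<bar>F (lam x) - F L\<bar> < e" using Fnear by simp
        then have "F (lam x) - e \<ge> 0" using True unfolding e_def by (auto simp: abs_if split: if_splits)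
        then show "\<exists>y. DERIV (\<lambda>s. plam s - e * s) x :> y \<and> y \<ge> 0"
          by (intro exI[of _ "F (lam x) - e"] conjI) (auto intro!: derivative_eq_intros der)
      qed
      then show ?thesis by (simp add: algebra_simps)
    qed
    moreover have "e * (t - T) = P - plam T + 1" unfolding t_def using e by simp
    ultimately show False using bp[of t] by linarith
  next
    case False
    then have neg: "F L < 0" using FL by simp
    define t where "t = T + (plam T + 1) / e"
    have tT: "t \<ge> T"
    proof -
      have "plam T \<ge> 0" using ppos[of T] T(1) by simp
      then show ?thesis unfolding t_def using e by simp
    qed
    have "plam t \<le> plam T - e * (t - T)"
    proof -
      have "(\<lambda>s. plam s + e * s) t \<le> (\<lambda>s. plam s + e * s) T"
      proof (rule DERIV_nonpos_imp_nonincreasing[OF tT])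
        fix x assume "T \<le> x" "x \<le> t"
        then have "\<bar>F (lam x) - F L\<bar> < e" using Fnear by simp
        then have "F (lam x) + e \<le> 0" using neg unfolding e_def by (auto simp: abs_if split: if_splits)
        then show "\<exists>y. DERIV (\<lambda>s. plam s + e * s) x :> y \<and> y \<le> 0"
          by (intro exI[of _ "F (lam x) + e"] conjI) (auto intro!: derivative_eq_intros der)
      qed
      then show ?thesis by (simp add: algebra_simps)
    qed
    moreover have "e * (t - T) = plam T + 1" unfolding t_def using e by simp
    ultimately show False using ppos[of t] T(1) tT by linarith
  qed
qed




lemma deriv_refl:
  fixes f :: "real \<Rightarrow> real"
  assumes "(f has_real_derivative D) (at (c - t))"
  shows "((\<lambda>s. f (c - s)) has_real_derivative - D) (at t)"
proof -
  have "((\<lambda>s. c - s) has_real_derivative -1) (at t)" by (auto intro!: derivative_eq_intros)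
  from DERIV_chain2[of f D "\<lambda>s. c - s" t, OF _ this] assms show ?thesis by simp
qed

lemma lam_main_pos:
  fixes F V lam plam :: "real \<Rightarrow> real" and E M P K s0 :: real
  assumes der: "\<And>t. (lam has_real_derivative plam t) (at t)"
      "\<And>t. (plam has_real_derivative F (lam t)) (at t)"
    and en: "\<And>t. (plam t)^2/2 + V (lam t) = E"
    and bl: "\<And>t. \<bar>lam t\<bar> \<le> M" and bp: "\<And>t. \<bar>plam t\<bar> \<le> P"
    and lip: "\<And>a b. \<bar>a\<bar> \<le> M \<Longrightarrow> \<bar>b\<bar> \<le> M \<Longrightarrow> \<bar>F a - F b\<bar> \<le> K * \<bar>a - b\<bar>" and K: "K \<ge> 0"
    and odd: "\<And>x. F (-x) = - F x"
    and cF: "\<And>x. isCont F x" and cV: "\<And>x. isCont V x"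
    and reg: "\<And>x p. p^2/2 + V x = E \<Longrightarrow> p \<noteq> 0 \<or> F x \<noteq> 0"
    and z: "lam s0 = 0" and p0: "plam s0 > 0"
  shows "\<exists>\<delta>>0. (\<forall>t. lam t = 0 \<longleftrightarrow> (\<exists>k::int. t = s0 + of_int k * \<delta>)) \<and> Tlam lam plam = 2*\<delta>"
proof -
  have contl: "continuous_on S lam" for S
    using der(1) by (meson DERIV_continuous continuous_at_imp_continuous_on)
  have refl_zero: "lam (2*z - t) = - lam t \<and> plam (2*z - t) = plam t" if lz: "lam z = 0" for z t
  proof -
    have d1: "((\<lambda>t. - lam (2*z - t)) has_real_derivative plam (2*z - t)) (at t)" for t
      using DERIV_minus[OF deriv_refl[OF der(1)[of "2*z-t"]]] by simp
    have d2: "((\<lambda>t. plam (2*z - t)) has_real_derivative F (- lam (2*z - t))) (at t)" for t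
      using deriv_refl[OF der(2)[of "2*z-t"]] by (simp add: odd)
    have l: "\<bar>F (- lam (2 * z - t)) - F (lam t)\<bar> \<le> K * \<bar>- lam (2 * z - t) - lam t\<bar>" for t
      using bl by (intro lip) auto
    have "(\<lambda>t. - lam (2*z - t)) t = lam t \<and> (\<lambda>t. plam (2*z - t)) t = plam t"
      using ode_unique[where F=F and K=K and tz=z and xa="\<lambda>t. - lam (2*z - t)"
            and pa="\<lambda>t. plam (2*z - t)" and xb=lam and pb=plam, OF d1 d2 der l K, of t] lz by simp
    then show ?thesis by simp
  qed
  have rev: "lam (2*r - t) = lam t \<and> plam (2*r - t) = - plam t" if pr: "plam r = 0" for r t
  proof -
    have d1: "((\<lambda>t. lam (2*r - t)) has_real_derivative - plam (2*r - t)) (at t)" for t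
      using deriv_refl[OF der(1)[of "2*r-t"]] by simp
    have d2: "((\<lambda>t. - plam (2*r - t)) has_real_derivative F (lam (2*r - t))) (at t)" for t
      using DERIV_minus[OF deriv_refl[OF der(2)[of "2*r-t"]]] by simp
    have l: "\<bar>F (lam (2 * r - t)) - F (lam t)\<bar> \<le> K * \<bar>lam (2 * r - t) - lam t\<bar>" for t
      using bl by (intro lip) auto
    have "(\<lambda>t. lam (2*r - t)) t = lam t \<and> (\<lambda>t. - plam (2*r - t)) t = plam t"
      using ode_unique[where F=F and K=K and tz=r and xa="\<lambda>t. lam (2*r - t)"
            and pa="\<lambda>t. - plam (2*r - t)" and xb=lam and pb=plam, OF d1 d2 der l K, of t] pr by simp
    then show ?thesis by simp
  qed
  have regE: "F x \<noteq> 0" if "V x = E" for x using reg[of 0 x] that by simp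
  have blM: "lam t \<le> M" for t using bl[of t] by simp
  have bpP: "plam t \<le> P" for t using bp[of t] by simp
  obtain r where r: "r > s0" "plam r = 0"
    using return_lemma[OF der en blM bpP cF cV regE p0] by blast
  have z1: "lam (2*r - s0) = 0" using rev[OF r(2), of s0] z by simp
  obtain d where d: "d > 0" "\<And>h. 0 < h \<Longrightarrow> h < d \<Longrightarrow> lam s0 < lam (s0 + h)"
    using DERIV_pos_inc_right[OF der(1) p0] by blast
  define Z where "Z = {t. t > s0 \<and> lam t = 0}"
  have Zge: "t \<ge> s0 + d" if "t \<in> Z" for t
  proof (rule ccontr)
    assume "\<not> t \<ge> s0 + d"
    then have "lam s0 < lam (s0 + (t - s0))" using that d(2)[of "t - s0"] unfolding Z_def by auto
    then show False using that z unfolding Z_def by simp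
  qed
  have Zeq: "Z = {t. s0 + d/2 \<le> t} \<inter> {t. lam t = 0}"
    using Zge d(1) unfolding Z_def by force
  have contI: "continuous_on UNIV lam" by (rule contl)
  have Zclosed: "closed Z" unfolding Zeq
    by (intro closed_Int closed_Collect_le closed_Collect_eq continuous_intros contI)
  have "2*r - s0 \<in> Z" using z1 r(1) unfolding Z_def by auto
  then have Zne: "Z \<noteq> {}" by blast
  have Zbdd: "bdd_below Z" unfolding Z_def by (intro bdd_belowI[of _ s0]) auto
  define s1 where "s1 = Inf Z"
  have s1Z: "s1 \<in> Z" unfolding s1_def by (rule closed_contains_Inf[OF Zne Zbdd Zclosed])
  have s1z: "lam s1 = 0" "s1 > s0" using s1Z unfolding Z_def by auto
  have noz: "lam t \<noteq> 0" if "s0 < t" "t < s1" for t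
  proof
    assume "lam t = 0"
    then have "t \<in> Z" using that unfolding Z_def by auto
    then have "s1 \<le> t" unfolding s1_def using Zbdd by (rule cInf_lower)
    then show False using that by simp
  qed
  define \<delta> where "\<delta> = s1 - s0"
  have \<delta>: "\<delta> > 0" using s1z unfolding \<delta>_def by simp
  have per: "lam (t + 2*\<delta>) = lam t \<and> plam (t + 2*\<delta>) = plam t" for t
  proof -
    have e: "t + 2*\<delta> = 2* s1 - (2* s0 - t)" unfolding \<delta>_def by simp
    show ?thesis unfolding e using refl_zero[OF s1z(1), of "2* s0 - t"] refl_zero[OF z, of t] by simp
  qed
  have pernat: "lam (t + real n * (2*\<delta>)) = lam t \<and> plam (t + real n * (2*\<delta>)) = plam t" for n t
  proof (induction n)
    case (Suc n)
    have "t + real (Suc n) * (2*\<delta>) = (t + real n * (2*\<delta>)) + 2*\<delta>" by (simp add: algebra_simps)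
    then show ?case using per[of "t + real n * (2*\<delta>)"] Suc by (simp only: add.assoc[symmetric])
  qed simp
  have perint: "lam (t + of_int k * (2*\<delta>)) = lam t \<and> plam (t + of_int k * (2*\<delta>)) = plam t" for k t
  proof (cases "k \<ge> 0")
    case True
    then obtain n where "k = int n" using nonneg_int_cases by blast
    then show ?thesis using pernat[of t n] by simp
  next
    case False
    then have "- k \<ge> 0" by simp
    then obtain n where "- k = int n" using nonneg_int_cases by blast
    then have kn: "k = - int n" by simp
    have "lam (t + of_int k * (2*\<delta>) + real n * (2*\<delta>)) = lam (t + of_int k * (2*\<delta>)) \<and>
          plam (t + of_int k * (2*\<delta>) + real n * (2*\<delta>)) = plam (t + of_int k * (2*\<delta>))"
      by (rule pernat)
    then show ?thesis using kn by simp
  qed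
  have zeros: "lam t = 0 \<longleftrightarrow> (\<exists>k::int. t = s0 + of_int k * \<delta>)" for t
  proof
    assume lt: "lam t = 0"
    define j where "j = \<lfloor>(t - s0) / (2*\<delta>)\<rfloor>"
    define t' where "t' = t - of_int j * (2*\<delta>)"
    have j1: "of_int j \<le> (t - s0) / (2*\<delta>)" "(t - s0) / (2*\<delta>) < of_int j + 1"
      unfolding j_def by linarith+
    have t'b: "s0 \<le> t'" "t' < s0 + 2*\<delta>"
      using j1 \<delta> unfolding t'_def by (simp_all add: field_simps)
    have lt': "lam t' = 0"
      using perint[of t' j] lt unfolding t'_def by simp
    consider "t' = s0" | "s0 < t' \<and> t' < s1" | "t' = s1" | "s1 < t' \<and> t' < s0 + 2*\<delta>"
      using t'b by linarith
    then show "\<exists>k::int. t = s0 + of_int k * \<delta>"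
    proof cases
      case 1 then show ?thesis unfolding t'_def by (intro exI[of _ "2*j"]) (simp add: algebra_simps)
    next
      case 2 then show ?thesis using noz lt' by blast
    next
      case 3 then show ?thesis unfolding t'_def \<delta>_def
        by (intro exI[of _ "2*j+1"]) (simp add: algebra_simps)
    next
      case 4
      have "lam (2 * s1 - t') = 0" using refl_zero[OF s1z(1), of t'] lt' by simp
      moreover have "s0 < 2 * s1 - t'" "2 * s1 - t' < s1" using 4 unfolding \<delta>_def by auto
      ultimately show ?thesis using noz by blast
    qed
  next
    assume "\<exists>k::int. t = s0 + of_int k * \<delta>"
    then obtain k where k: "t = s0 + of_int k * \<delta>" by blast
    define j where "j = k div 2"
    have kj: "k = 2*j + k mod 2" unfolding j_def by simp
    consider "k mod 2 = 0" | "k mod 2 = 1" by fastforce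
    then show "lam t = 0"
    proof cases
      case 1
      then have "t = s0 + of_int j * (2*\<delta>)" using k kj by (simp add: algebra_simps)
      then show ?thesis using perint[of s0 j] z by simp
    next
      case 2
      then have "t = s1 + of_int j * (2*\<delta>)" using k kj unfolding \<delta>_def
        by (simp add: algebra_simps)
      then show ?thesis using perint[of s1 j] s1z by simp
    qed
  qed
  have ps1: "plam s1 \<le> 0"
  proof (rule ccontr)
    assume "\<not> plam s1 \<le> 0"
    then obtain d' where d': "d' > 0" "\<And>h. 0 < h \<Longrightarrow> h < d' \<Longrightarrow> lam (s1 - h) < lam s1"
      using DERIV_pos_inc_left[OF der(1)] by (metis not_le)
    define e where "e = min (min d d') \<delta> / 3"
    have e: "e > 0" "e < d" "e < d'" "2*e < \<delta>" using d(1) d'(1) \<delta> unfolding e_def by auto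
    have a: "lam (s0 + e) > 0" using d(2)[of e] e z by simp
    have b: "lam (s1 - e) < 0" using d'(2)[of e] e s1z by simp
    have ab: "s0 + e \<le> s1 - e" using e unfolding \<delta>_def by simp
    obtain x where x: "s0 + e \<le> x" "x \<le> s1 - e" "lam x = 0"
      using IVT2'[of lam "s1 - e" 0 "s0 + e", OF _ _ ab contl] a b by auto
    then show False using noz[of x] e by simp
  qed
  have Tl: "Tlam lam plam = 2*\<delta>"
    unfolding Tlam_def
  proof (rule cInf_eq_minimum)
    show "2*\<delta> \<in> {T. T > 0 \<and> (\<forall>t. lam (t + T) = lam t \<and> plam (t + T) = plam t)}"
      using per \<delta> by simp
  next
    fix T assume "T \<in> {T. T > 0 \<and> (\<forall>t. lam (t + T) = lam t \<and> plam (t + T) = plam t)}"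
    then have T: "T > 0" "\<And>t. lam (t + T) = lam t \<and> plam (t + T) = plam t" by auto
    have "lam (s0 + T) = 0" using T(2)[of s0] z by simp
    then obtain k :: int where k: "s0 + T = s0 + of_int k * \<delta>" using zeros by blast
    then have Tk: "T = of_int k * \<delta>" by simp
    have "k > 0" using T(1) \<delta> Tk by (simp add: zero_less_mult_iff)
    moreover have "k \<noteq> 1"
    proof
      assume "k = 1"
      then have "s0 + T = s1" using Tk unfolding \<delta>_def by simp
      then have "plam s1 = plam s0" using T(2)[of s0] by simp
      then show False using ps1 p0 by simp
    qed
    ultimately have "k \<ge> 2" by simp
    then have "of_int k * \<delta> \<ge> 2 * \<delta>" using \<delta> by (intro mult_right_mono) auto
    then show "2*\<delta> \<le> T" using Tk by simp
  qed
  show ?thesis using \<delta> zeros Tl by blast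
qed



lemma lam_main:
  fixes F V lam plam :: "real \<Rightarrow> real" and E M P K s0 :: real
  assumes der: "\<And>t. (lam has_real_derivative plam t) (at t)"
      "\<And>t. (plam has_real_derivative F (lam t)) (at t)"
    and en: "\<And>t. (plam t)^2/2 + V (lam t) = E"
    and bl: "\<And>t. \<bar>lam t\<bar> \<le> M" and bp: "\<And>t. \<bar>plam t\<bar> \<le> P"
    and lip: "\<And>a b. \<bar>a\<bar> \<le> M \<Longrightarrow> \<bar>b\<bar> \<le> M \<Longrightarrow> \<bar>F a - F b\<bar> \<le> K * \<bar>a - b\<bar>" and K: "K \<ge> 0"
    and odd: "\<And>x. F (-x) = - F x"
    and cF: "\<And>x. isCont F x" and cV: "\<And>x. isCont V x"
    and reg: "\<And>x p. p^2/2 + V x = E \<Longrightarrow> p \<noteq> 0 \<or> F x \<noteq> 0"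
    and z: "lam s0 = 0"
  shows "\<exists>\<delta>>0. (\<forall>t. lam t = 0 \<longleftrightarrow> (\<exists>k::int. t = s0 + of_int k * \<delta>)) \<and> Tlam lam plam = 2*\<delta>"
proof -
  have F0: "F 0 = 0" using odd[of 0] by simp
  have "plam s0 \<noteq> 0" using reg[of "plam s0" 0] en[of s0] z F0 by auto
  then consider "plam s0 > 0" | "plam s0 < 0" by linarith
  then show ?thesis
  proof cases
    case 1
    show ?thesis using lam_main_pos[OF der en bl bp lip K odd cF cV reg z 1] by blast
  next
    case 2
    define lam' where "lam' t = - lam t" for t
    define plam' where "plam' t = - plam t" for t
    define V' where "V' x = V (- x)" for x
    have der': "(lam' has_real_derivative plam' t) (at t)" "(plam' has_real_derivative F (lam' t)) (at t)" for t
      unfolding lam'_def plam'_def using DERIV_minus[OF der(1)] DERIV_minus[OF der(2)] odd by auto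
    have en': "(plam' t)^2/2 + V' (lam' t) = E" for t unfolding lam'_def plam'_def V'_def using en by simp
    have bl': "\<bar>lam' t\<bar> \<le> M" "\<bar>plam' t\<bar> \<le> P" for t unfolding lam'_def plam'_def using bl bp by auto
    have cV': "isCont V' x" for x unfolding V'_def using isCont_o2[of x uminus V] cV by (simp add: o_def)
    have reg': "p \<noteq> 0 \<or> F x \<noteq> 0" if "p^2/2 + V' x = E" for x p
      using reg[of p "-x"] that odd[of x] unfolding V'_def by auto
    have z': "lam' s0 = 0" and p': "plam' s0 > 0" using z 2 unfolding lam'_def plam'_def by auto
    obtain \<delta> where \<delta>: "\<delta> > 0" "\<forall>t. lam' t = 0 \<longleftrightarrow> (\<exists>k::int. t = s0 + of_int k * \<delta>)"
        "Tlam lam' plam' = 2*\<delta>"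
      using lam_main_pos[OF der' en' bl' lip K odd cF cV' reg' z' p'] by blast
    have "Tlam lam' plam' = Tlam lam plam" unfolding Tlam_def lam'_def plam'_def by simp
    then show ?thesis using \<delta> unfolding lam'_def by auto
  qed
qed



lemma cos_refl: "cos (c::real) = 0 \<Longrightarrow> cos (2*c - x) = - cos x"
proof -
  assume c: "cos c = 0"
  have "cos (2*c) = -1" using c by (simp add: cos_double_cos)
  moreover have "sin (2*c) = 0" using c by (simp add: sin_double)
  ultimately show ?thesis by (simp add: cos_diff)
qed

lemma sin_refl: "cos (c::real) = 0 \<Longrightarrow> sin (2*c - x) = sin x"
proof -
  assume c: "cos c = 0"
  have "cos (2*c) = -1" using c by (simp add: cos_double_cos)
  moreover have "sin (2*c) = 0" using c by (simp add: sin_double)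
  ultimately show ?thesis by (simp add: sin_diff)
qed

lemma nu_main_pos:
  fixes G nu pnu :: "real \<Rightarrow> real" and K t1 t2 :: real
  assumes der: "\<And>t. (nu has_real_derivative pnu t) (at t)"
      "\<And>t. (pnu has_real_derivative G (nu t)) (at t)"
    and lip: "\<And>a b. \<bar>G a - G b\<bar> \<le> K * \<bar>a - b\<bar>" and K: "K \<ge> 0"
    and sym: "\<And>c x. cos c = 0 \<Longrightarrow> G (2*c - x) = - G x"
    and t12: "t1 < t2" "cos (nu t1) = 0" "cos (nu t2) = 0"
    and between: "\<And>t. t1 < t \<Longrightarrow> t < t2 \<Longrightarrow> cos (nu t) \<noteq> 0"
    and p0: "pnu t1 > 0"
  shows "Tnu nu pnu = 2*(t2 - t1)"
proof -
  have contn: "continuous_on S nu" for S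
    using der(1) by (meson DERIV_continuous continuous_at_imp_continuous_on)
  have refl: "nu (2*z - t) = 2 * nu z - nu t \<and> pnu (2*z - t) = pnu t" if cz: "cos (nu z) = 0" for z t
  proof -
    have d1: "((\<lambda>t. 2 * nu z - nu (2*z - t)) has_real_derivative pnu (2*z - t)) (at t)" for t
      using DERIV_diff[OF DERIV_const deriv_refl[OF der(1)[of "2*z-t"]]] by simp
    have d2: "((\<lambda>t. pnu (2*z - t)) has_real_derivative G (2 * nu z - nu (2*z - t))) (at t)" for t
      using deriv_refl[OF der(2)[of "2*z-t"]] sym[OF cz] by simp
    have l: "\<bar>G (2 * nu z - nu (2*z - t)) - G (nu t)\<bar> \<le> K * \<bar>(2 * nu z - nu (2*z - t)) - nu t\<bar>" for t
      by (rule lip)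
    have "(\<lambda>t. 2 * nu z - nu (2*z - t)) t = nu t \<and> (\<lambda>t. pnu (2*z - t)) t = pnu t"
      using ode_unique[where F=G and K=K and tz=z and xa="\<lambda>t. 2 * nu z - nu (2*z - t)"
            and pa="\<lambda>t. pnu (2*z - t)" and xb=nu and pb=pnu, OF d1 d2 der l K, of t] by simp
    then show ?thesis by simp
  qed
  define \<delta> where "\<delta> = t2 - t1"
  define c1 where "c1 = nu t1"
  define c2 where "c2 = nu t2"
  obtain n1 :: int where n1: "c1 = n1 * pi + pi/2" using t12(2) cos_zero_iff_int2 unfolding c1_def by blast
  obtain n2 :: int where n2: "c2 = n2 * pi + pi/2" using t12(3) cos_zero_iff_int2 unfolding c2_def by blast
  have per: "nu (t + 2*\<delta>) = nu t + 2*pi* of_int (n2 - n1) \<and> pnu (t + 2*\<delta>) = pnu t" for t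
  proof -
    have e: "t + 2*\<delta> = 2*t2 - (2*t1 - t)" unfolding \<delta>_def by simp
    have "nu (t + 2*\<delta>) = 2*c2 - (2*c1 - nu t)"
      unfolding e using refl[OF t12(3), of "2*t1 - t"] refl[OF t12(2), of t] unfolding c1_def c2_def by simp
    also have "\<dots> = nu t + 2*pi* of_int (n2 - n1)" unfolding n1 n2 by (simp add: algebra_simps)
    finally have h1: "nu (t + 2*\<delta>) = nu t + 2*pi* of_int (n2 - n1)" .
    have h2: "pnu (t + 2*\<delta>) = pnu t"
      unfolding e using refl[OF t12(3), of "2*t1 - t"] refl[OF t12(2), of t] by simp
    show ?thesis using h1 h2 by simp
  qed
  have cyl_shift: "cyl (x + 2*pi* of_int m, p) = cyl (x, p)" for x p and m :: int
  proof -
    have "sin (x + 2*pi* of_int m) = sin x \<and> cos (x + 2*pi* of_int m) = cos x"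
      using sin_cos_eq_iff by blast
    then show ?thesis by (simp add: cyl_def)
  qed
  have cyl_eq: "cyl (a, p) = cyl (b, q) \<longleftrightarrow> cos a = cos b \<and> sin a = sin b \<and> p = q" for a b p q
    by (simp add: cyl_def)
  show ?thesis
    unfolding Tnu_def
  proof (rule cInf_eq_minimum)
    show "2*(t2 - t1) \<in> {T. T > 0 \<and> (\<forall>t. cyl (nu (t + T), pnu (t + T)) = cyl (nu t, pnu t))}"
    proof (intro CollectI conjI allI)
      show "2*(t2 - t1) > 0" using t12(1) by simp
      fix t
      have "cyl (nu (t + 2*(t2-t1)), pnu (t + 2*(t2-t1))) = cyl (nu t + 2*pi* of_int (n2-n1), pnu t)"
        using per[of t] unfolding \<delta>_def by simp
      also have "\<dots> = cyl (nu t, pnu t)" by (rule cyl_shift)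
      finally show "cyl (nu (t + 2*(t2-t1)), pnu (t + 2*(t2-t1))) = cyl (nu t, pnu t)" .
    qed
  next
    fix T assume "T \<in> {T. T > 0 \<and> (\<forall>t. cyl (nu (t + T), pnu (t + T)) = cyl (nu t, pnu t))}"
    then have T: "T > 0" "\<And>t. cos (nu (t + T)) = cos (nu t) \<and> sin (nu (t + T)) = sin (nu t) \<and> pnu (t + T) = pnu t"
      using cyl_eq by auto
    show "2*(t2 - t1) \<le> T"
    proof (rule ccontr)
      assume "\<not> 2*(t2 - t1) \<le> T"
      then have Tlt: "T < 2*(t2 - t1)" by simp
      define s where "s = t1 + T"
      have cs: "cos (nu s) = 0" using T(2)[of t1] t12(2) unfolding s_def by simp
      consider "s < t2" | "s > t2" | "s = t2" by linarith
      then show False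
      proof cases
        case 1 then show False using between[of s] cs T(1) unfolding s_def by simp
      next
        case 2
        have "cos (nu (2*t2 - s)) = 0" using refl[OF t12(3), of s] cos_refl[OF t12(3), of "nu s"] cs by simp
        moreover have "t1 < 2*t2 - s" "2*t2 - s < t2" using 2 Tlt unfolding s_def by auto
        ultimately show False using between by blast
      next
        case 3
        have sc: "sin (nu t2) = sin c1 \<and> cos (nu t2) = cos c1" "pnu t2 = pnu t1"
          using T(2)[of t1] 3 unfolding s_def c1_def by auto
        obtain m :: int where m: "nu t2 = c1 + 2*pi*m" using sc(1) sin_cos_eq_iff by blast
        obtain d where d: "d > 0" "\<And>h. 0 < h \<Longrightarrow> h < d \<Longrightarrow> nu t1 < nu (t1 + h)"
          using DERIV_pos_inc_right[OF der(1) p0] by blast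
        obtain d2 where d2: "d2 > 0" "\<And>y. \<bar>y - t1\<bar> < d2 \<Longrightarrow> \<bar>nu y - nu t1\<bar> < pi"
          using cont_eps[OF DERIV_isCont[OF der(1)[of t1]] pi_gt_zero] by blast
        define a where "a = t1 + min (min d d2) (t2 - t1) / 2"
        have ah: "0 < a - t1" "a - t1 < d" "a - t1 < d2" "a - t1 < t2 - t1"
          using d(1) d2(1) t12(1) unfolding a_def by (auto simp: min_def)
        have a: "t1 < a" "a < t2" "c1 < nu a" "nu a < c1 + pi"
          using ah d(2)[of "a - t1"] d2(2)[of a] unfolding c1_def by auto
        have cz1: "cos c1 = 0" using t12(2) c1_def by simp
        have cz2: "cos (c1 + pi) = 0" using cz1 by simp
        have nohit: "False" if "a \<le> x" "x < t2" "nu x = c1 \<or> nu x = c1 + pi" for x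
          using between[of x] that a(1) cz1 cz2 by auto
        have ca: "continuous_on {a..t2} nu" by (rule contn)
        consider "m \<ge> 1" | "m \<le> -1" | "m = 0" by linarith
        then show False
        proof cases
          case 1
          then have "nu t2 \<ge> c1 + 2*pi" using m pi_gt_zero by (simp add: mult_left_mono[of 1 "real_of_int m" "2*pi", simplified])
          then obtain x where x: "a \<le> x" "x \<le> t2" "nu x = c1 + pi"
            using IVT'[of nu a "c1 + pi" t2, OF _ _ _ ca] a pi_gt_zero by auto
          have "x \<noteq> t2" using x(3) \<open>nu t2 \<ge> c1 + 2*pi\<close> pi_gt_zero by auto
          then show False using nohit[of x] x by auto
        next
          case 2
          then have "nu t2 \<le> c1 - 2*pi" using m pi_gt_zero
            by (simp add: mult_left_mono[of "real_of_int m" "-1" "2*pi", simplified])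
          then obtain x where x: "a \<le> x" "x \<le> t2" "nu x = c1"
            using IVT2'[of nu t2 c1 a, OF _ _ _ ca] a pi_gt_zero by auto
          have "x \<noteq> t2"
          proof
            assume "x = t2"
            then have "c1 \<le> c1 - 2*pi" using x(3) \<open>nu t2 \<le> c1 - 2*pi\<close> by simp
            then show False using pi_gt_zero by linarith
          qed
          then show False using nohit[of x] x by auto
        next
          case 3
          then have e2: "nu t2 = c1" using m by simp
          have "pnu t2 > 0" using sc(2) p0 by simp
          then obtain d3 where d3: "d3 > 0" "\<And>h. 0 < h \<Longrightarrow> h < d3 \<Longrightarrow> nu (t2 - h) < nu t2"
            using DERIV_pos_inc_left[OF der(1)] by blast
          define b where "b = t2 - min d3 (t2 - a) / 2"
          have bh: "0 < t2 - b" "t2 - b < d3" "t2 - b < t2 - a"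
            using d3(1) a(2) unfolding b_def by (auto simp: min_def)
          have b: "a < b" "b < t2" "nu b < c1" using bh e2 d3(2)[of "t2 - b"] by auto
          obtain x where x: "a \<le> x" "x \<le> b" "nu x = c1"
            using IVT2'[of nu b c1 a] contn b a by auto
          then show False using nohit[of x] b by auto
        qed
      qed
    qed
  qed
qed



lemma nu_main:
  fixes G nu pnu :: "real \<Rightarrow> real" and K t1 t2 :: real
  assumes der: "\<And>t. (nu has_real_derivative pnu t) (at t)"
      "\<And>t. (pnu has_real_derivative G (nu t)) (at t)"
    and lip: "\<And>a b. \<bar>G a - G b\<bar> \<le> K * \<bar>a - b\<bar>" and K: "K \<ge> 0"
    and sym: "\<And>c x. cos c = 0 \<Longrightarrow> G (2*c - x) = - G x"
    and t12: "t1 < t2" "cos (nu t1) = 0" "cos (nu t2) = 0"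
    and between: "\<And>t. t1 < t \<Longrightarrow> t < t2 \<Longrightarrow> cos (nu t) \<noteq> 0"
    and p0: "pnu t1 \<noteq> 0"
  shows "Tnu nu pnu = 2*(t2 - t1)"
proof (cases "pnu t1 > 0")
  case True
  then show ?thesis using nu_main_pos[OF der lip K sym t12 between] by blast
next
  case False
  then have pn: "pnu t1 < 0" using p0 by simp
  define nu' where "nu' t = pi - nu t" for t
  define pnu' where "pnu' t = - pnu t" for t
  have Gpi: "G (pi - x) = - G x" for x using sym[of "pi/2" x] by simp
  have der': "(nu' has_real_derivative pnu' t) (at t)" "(pnu' has_real_derivative G (nu' t)) (at t)" for t
    unfolding nu'_def pnu'_def using DERIV_diff[OF DERIV_const der(1)] DERIV_minus[OF der(2)] Gpi
    by auto
  have t12': "cos (nu' t1) = 0" "cos (nu' t2) = 0" using t12 unfolding nu'_def by simp_all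
  have between': "cos (nu' t) \<noteq> 0" if "t1 < t" "t < t2" for t
    using between[OF that] unfolding nu'_def by simp
  have p': "pnu' t1 > 0" using pn unfolding pnu'_def by simp
  have "Tnu nu' pnu' = 2*(t2 - t1)" using nu_main_pos[OF der' lip K sym t12(1) t12' between' p'] .
  moreover have "Tnu nu' pnu' = Tnu nu pnu" unfolding Tnu_def nu'_def pnu'_def cyl_def by simp
  ultimately show ?thesis by simp
qed



lemma count_lemma:
  fixes s0 \<delta> t1 t2 :: real
  assumes \<delta>: "\<delta> > 0" and t12: "t1 < t2"
    and nt: "\<And>k::int. s0 + of_int k * \<delta> \<noteq> t1" "\<And>k::int. s0 + of_int k * \<delta> \<noteq> t2"
  shows "finite {t. t1 < t \<and> t < t2 \<and> (\<exists>k::int. t = s0 + of_int k * \<delta>)} \<and>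
    (int (card {t. t1 < t \<and> t < t2 \<and> (\<exists>k::int. t = s0 + of_int k * \<delta>)}) = \<lfloor>(t2 - t1)/\<delta>\<rfloor> \<or>
     int (card {t. t1 < t \<and> t < t2 \<and> (\<exists>k::int. t = s0 + of_int k * \<delta>)}) = \<lfloor>(t2 - t1)/\<delta>\<rfloor> + 1)"
proof -
  define a where "a = (t1 - s0)/\<delta>"
  define b where "b = (t2 - s0)/\<delta>"
  define f where "f k = s0 + of_int k * \<delta>" for k :: int
  have ka: "t1 < f k \<longleftrightarrow> a < of_int k" for k
    unfolding a_def f_def using \<delta> by (simp add: field_simps)
  have kb: "f k < t2 \<longleftrightarrow> of_int k < b" for k
    unfolding b_def f_def using \<delta> by (simp add: field_simps)
  have bne: "of_int k \<noteq> b" for k :: int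
  proof
    assume "of_int k = b"
    then have "f k = t2" unfolding b_def f_def using \<delta> by (simp add: field_simps)
    then show False using nt(2)[of k] unfolding f_def by simp
  qed
  have iv: "{k::int. a < of_int k \<and> of_int k < b} = {\<lfloor>a\<rfloor>+1 .. \<lfloor>b\<rfloor>}"
  proof (intro set_eqI iffI)
    fix k assume "k \<in> {k::int. a < of_int k \<and> of_int k < b}"
    then have "\<lfloor>a\<rfloor> < k" "k \<le> \<lfloor>b\<rfloor>" by (auto simp: floor_less_iff le_floor_iff)
    then show "k \<in> {\<lfloor>a\<rfloor>+1 .. \<lfloor>b\<rfloor>}" by simp
  next
    fix k assume "k \<in> {\<lfloor>a\<rfloor>+1 .. \<lfloor>b\<rfloor>}"
    then have "\<lfloor>a\<rfloor> < k" "of_int k \<le> b" by (auto simp: le_floor_iff)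
    then show "k \<in> {k::int. a < of_int k \<and> of_int k < b}"
      using bne[of k] by (auto simp: floor_less_iff)
  qed
  have seteq: "{t. t1 < t \<and> t < t2 \<and> (\<exists>k::int. t = s0 + of_int k * \<delta>)} = f ` {\<lfloor>a\<rfloor>+1 .. \<lfloor>b\<rfloor>}"
    unfolding iv[symmetric] using ka kb unfolding f_def by auto
  have inj: "inj f" unfolding f_def using \<delta> by (intro injI) simp
  have card: "card (f ` {\<lfloor>a\<rfloor>+1 .. \<lfloor>b\<rfloor>}) = nat (\<lfloor>b\<rfloor> - \<lfloor>a\<rfloor>)"
    using card_image[OF inj_on_subset[OF inj subset_UNIV]] by simp
  have ab: "a \<le> b" using t12 \<delta> unfolding a_def b_def by (simp add: divide_right_mono)
  then have "\<lfloor>a\<rfloor> \<le> \<lfloor>b\<rfloor>" by (rule floor_mono)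
  then have ci: "int (card (f ` {\<lfloor>a\<rfloor>+1 .. \<lfloor>b\<rfloor>})) = \<lfloor>b\<rfloor> - \<lfloor>a\<rfloor>" using card by simp
  have bW: "b = a + (t2 - t1)/\<delta>" unfolding a_def b_def by (simp add: diff_divide_distrib)
  have "\<lfloor>b\<rfloor> = \<lfloor>a\<rfloor> + \<lfloor>(t2 - t1)/\<delta>\<rfloor> \<or> \<lfloor>b\<rfloor> = \<lfloor>a\<rfloor> + \<lfloor>(t2 - t1)/\<delta>\<rfloor> + 1"
    unfolding bW floor_add by simp
  then show ?thesis unfolding seteq using ci by auto
qed



lemma lip_mvt:
  fixes f f' :: "real \<Rightarrow> real"
  assumes der: "\<And>x. (f has_real_derivative f' x) (at x)"
    and bd: "\<And>x. \<bar>x\<bar> \<le> M \<Longrightarrow> \<bar>f' x\<bar> \<le> K"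
    and ab: "\<bar>a\<bar> \<le> M" "\<bar>b\<bar> \<le> M"
  shows "\<bar>f a - f b\<bar> \<le> K * \<bar>a - b\<bar>"
proof -
  have main: "\<bar>f y - f x\<bar> \<le> K * \<bar>y - x\<bar>" if xy: "x < y" "\<bar>x\<bar> \<le> M" "\<bar>y\<bar> \<le> M" for x y
  proof -
    obtain z where z: "x < z" "z < y" "f y - f x = (y - x) * f' z"
      using MVT2[OF xy(1), of f f'] der by blast
    have "\<bar>z\<bar> \<le> M" using z xy by auto
    then have "\<bar>f' z\<bar> \<le> K" by (rule bd)
    then show ?thesis using z(3) xy(1) by (simp add: abs_mult mult_right_mono mult.commute)
  qed
  consider "a < b" | "a = b" | "b < a" by linarith
  then show ?thesis
  proof cases
    case 1 then show ?thesis using main[of a b] ab by (simp add: abs_minus_commute)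
  next
    case 2 then show ?thesis by simp
  next
    case 3 then show ?thesis using main[of b a] ab by simp
  qed
qed

lemma Hlam_eq: "Hlam d m1 m2 h = (\<lambda>z. (snd z)^2/2 - d*(m1+m2)*cosh (fst z) - h*d^2*(cosh (fst z))^2)"
  by (auto simp: Hlam_def fun_eq_iff split: prod.splits)

lemma Hnu_eq: "Hnu d m1 m2 h = (\<lambda>z. (snd z)^2/2 + d*(m1-m2)* sin (fst z) + h*d^2*(sin (fst z))^2)"
  by (auto simp: Hnu_def fun_eq_iff split: prod.splits)

lemma cosh_fst_deriv:
  "((\<lambda>z::real\<times>real. cosh (fst z)) has_derivative (\<lambda>v. sinh (fst z0) * fst v)) (at z0)"
proof -
  have "(cosh has_real_derivative sinh (fst z0)) (at (fst z0))"
    by (auto intro!: derivative_eq_intros)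
  then have c: "(cosh has_derivative (\<lambda>y. sinh (fst z0) * y)) (at (fst z0))"
    by (rule has_field_derivative_imp_has_derivative)
  have f: "(fst has_derivative fst) (at z0)" by (rule bounded_linear.has_derivative[OF bounded_linear_fst has_derivative_ident]) 
  show ?thesis using has_derivative_compose[OF f c] by simp
qed

lemma Hlam_deriv:
  "(Hlam d m1 m2 h has_derivative
     (\<lambda>v. p * snd v - (d*(m1+m2)* sinh x + 2*h*d^2*cosh x* sinh x) * fst v)) (at (x,p))"
  unfolding Hlam_eq
  by (auto intro!: derivative_eq_intros cosh_fst_deriv simp: fun_eq_iff algebra_simps)

lemma Hnu_deriv:
  "(Hnu d m1 m2 h has_derivative
     (\<lambda>v. p * snd v + (d*(m1-m2)*cos x + 2*h*d^2* sin x*cos x) * fst v)) (at (x,p))"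
  unfolding Hnu_eq
  by (auto intro!: derivative_eq_intros simp: fun_eq_iff algebra_simps)

lemma reg_lam:
  assumes "regular_value (Hlam d m1 m2 h) c" "Hlam d m1 m2 h (x,p) = c"
  shows "p \<noteq> 0 \<or> d*(m1+m2)* sinh x + 2*h*d^2*cosh x* sinh x \<noteq> 0"
proof (rule ccontr)
  assume "\<not> ?thesis"
  then have z: "p = 0" "d*(m1+m2)* sinh x + 2*h*d^2*cosh x* sinh x = 0" by auto
  obtain D where D: "(Hlam d m1 m2 h has_derivative D) (at (x,p))" "D \<noteq> (\<lambda>_. 0)"
    using assms unfolding regular_value_def by blast
  have "D = (\<lambda>v. p * snd v - (d*(m1+m2)* sinh x + 2*h*d^2*cosh x* sinh x) * fst v)"
    using has_derivative_unique[OF D(1) Hlam_deriv] .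
  then show False using D(2) z by simp
qed

lemma reg_nu:
  assumes "regular_value (Hnu d m1 m2 h) c" "Hnu d m1 m2 h (x,p) = c"
  shows "p \<noteq> 0 \<or> d*(m1-m2)*cos x + 2*h*d^2* sin x*cos x \<noteq> 0"
proof (rule ccontr)
  assume "\<not> ?thesis"
  then have z: "p = 0" "d*(m1-m2)*cos x + 2*h*d^2* sin x*cos x = 0" by auto
  obtain D where D: "(Hnu d m1 m2 h has_derivative D) (at (x,p))" "D \<noteq> (\<lambda>_. 0)"
    using assms unfolding regular_value_def by blast
  have "D = (\<lambda>v. p * snd v + (d*(m1-m2)*cos x + 2*h*d^2* sin x*cos x) * fst v)"
    using has_derivative_unique[OF D(1) Hnu_deriv] .
  then show False using D(2) z by simp
qed




lemma cosh_sym_exp: "2 * cosh (x::real) = exp \<bar>x\<bar> + exp (- \<bar>x\<bar>)"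
  by (cases "x \<ge> 0") (auto simp: cosh_def)

lemma sinh_sym_exp: "2 * \<bar>sinh (x::real)\<bar> = exp \<bar>x\<bar> - exp (- \<bar>x\<bar>)"
  by (cases "x \<ge> 0") (auto simp: sinh_def abs_if field_simps)

lemma cosh_le_exp_abs: "cosh (x::real) \<le> exp \<bar>x\<bar>"
proof -
  have a: "exp (- \<bar>x\<bar>) \<le> exp \<bar>x\<bar>" by simp
  show ?thesis using a cosh_sym_exp[of x] by linarith
qed

lemma sinh_le_exp_abs: "\<bar>sinh (x::real)\<bar> \<le> exp \<bar>x\<bar>"
proof -
  have a: "exp (- \<bar>x\<bar>) > 0" by simp
  show ?thesis using a sinh_sym_exp[of x] by linarith
qed

lemma abs_le_2cosh: "\<bar>x\<bar> \<le> 2 * cosh (x::real)"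
proof -
  have "\<bar>x\<bar> < exp \<bar>x\<bar>" by (rule exp_gt_self)
  moreover have "exp (- \<bar>x\<bar>) > 0" by simp
  ultimately show ?thesis using cosh_sym_exp[of x] by linarith
qed

lemma abs_le_sq: "\<bar>p::real\<bar> \<le> 1 + p^2"
proof -
  have "0 \<le> (\<bar>p\<bar> - 1/2)^2" by simp
  then show ?thesis by (simp add: power2_eq_square algebra_simps)
qed




theorem corollary1:
  fixes d m1 m2 h g :: real and lam plam nu pnu :: "real \<Rightarrow> real"
    and t1 t2 :: real
  assumes "d > 0" and "m1 > 0" and "m2 > 0" and "h < 0"
    and orbit: "regularized_orbit d m1 m2 h lam plam nu pnu"
    and torus: "regular_torus d m1 m2 h g (lam 0, plam 0) (nu 0, pnu 0)"
    and ttype: "torus_type_L d m1 m2 h g (lam 0, plam 0) (nu 0, pnu 0) \<or>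
              torus_type_S d m1 m2 h g (lam 0, plam 0) (nu 0, pnu 0)"
    and nc: "non_collision lam nu"
    and "t1 < t2"
    and "syzygy lam nu t1 \<in> {Some 1, Some 2}"
    and "syzygy lam nu t2 \<in> {Some 1, Some 2}"
    and "\<forall>t. t1 < t \<and> t < t2 \<longrightarrow> syzygy lam nu t \<notin> {Some 1, Some 2}"
    and "{t. t1 < t \<and> t < t2 \<and> syzygy lam nu t = Some 3} \<noteq> {}"
  shows "finite {t. t1 < t \<and> t < t2 \<and> syzygy lam nu t = Some 3} \<and>
         (int (card {t. t1 < t \<and> t < t2 \<and> syzygy lam nu t = Some 3})
            = \<lfloor>rotation_number lam plam nu pnu\<rfloor> \<or>
          int (card {t. t1 < t \<and> t < t2 \<and> syzygy lam nu t = Some 3})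
            = \<lfloor>rotation_number lam plam nu pnu\<rfloor> + 1)"
proof -
  note hyps = assms(9-13)
  define A where "A = d*(m1+m2)"
  define B where "B = h*d^2"
  have A: "A > 0" using assms(1-3) unfolding A_def by simp
  have B: "B < 0" using assms(1,4) unfolding B_def by (simp add: mult_neg_pos)
  define Fl where "Fl x = d*(m1+m2)* sinh x + 2*h*d^2*cosh x* sinh x" for x
  define Vl where "Vl x = - d*(m1+m2)*cosh x - h*d^2*(cosh x)^2" for x
  define Gn where "Gn v = - (d*(m1-m2)*cos v + 2 * h * d^2 * sin v * cos v)" for v
  have derl: "(lam has_real_derivative plam t) (at t)" "(plam has_real_derivative Fl (lam t)) (at t)" for t
    using orbit unfolding regularized_orbit_def Fl_def by auto
  have dern: "(nu has_real_derivative pnu t) (at t)" "(pnu has_real_derivative Gn (nu t)) (at t)" for t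
    using orbit unfolding regularized_orbit_def Gn_def by auto
  have HlamE: "Hlam d m1 m2 h (lam t, plam t) = (plam t)^2/2 + Vl (lam t)" for t
    by (simp add: Hlam_def Vl_def)
  have HnuE: "Hnu d m1 m2 h (nu t, pnu t) = (pnu t)^2/2 + d*(m1-m2)* sin (nu t) + h*d^2*(sin (nu t))^2" for t
    by (simp add: Hnu_def)
  have dHl: "((\<lambda>t. (plam t)^2/2 + Vl (lam t)) has_real_derivative 0) (at t)" for t
    unfolding Vl_def
    by (rule derivative_eq_intros derl refl | simp)+ (simp add: Fl_def algebra_simps)
  have dHn: "((\<lambda>t. (pnu t)^2/2 + d*(m1-m2)* sin (nu t) + h*d^2*(sin (nu t))^2) has_real_derivative 0) (at t)" for t
    by (rule derivative_eq_intros dern refl | simp)+ (simp add: Gn_def algebra_simps)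
  have enl: "(plam t)^2/2 + Vl (lam t) = -g" for t
    using DERIV_isconst_all[of "\<lambda>t. (plam t)^2/2 + Vl (lam t)" t 0] dHl torus HlamE[of 0]
    unfolding regular_torus_def by simp
  have enn: "Hnu d m1 m2 h (nu t, pnu t) = g" for t
    using DERIV_isconst_all[of "\<lambda>t. (pnu t)^2/2 + d*(m1-m2)* sin (nu t) + h*d^2*(sin (nu t))^2" t 0] dHn
      torus HnuE[of 0] HnuE[of t]
    unfolding regular_torus_def by simp
  define C0 where "C0 = (\<bar>g\<bar> + A) / (- B)"
  have coshb: "cosh (lam t) \<le> C0" for t
  proof -
    define c where "c = cosh (lam t)"
    have c1: "c \<ge> 1" unfolding c_def by (rule cosh_real_ge_1)
    have "(plam t)^2/2 = -g + A*c + B*c^2" using enl[of t] unfolding Vl_def A_def B_def c_def by simp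
    moreover have "(plam t)^2/2 \<ge> 0" by simp
    ultimately have "- B * c^2 \<le> -g + A*c" by linarith
    also have "\<dots> \<le> \<bar>g\<bar> * c + A * c"
    proof -
      have "-g \<le> \<bar>g\<bar> * 1" by simp
      also have "\<dots> \<le> \<bar>g\<bar> * c" using c1 by (intro mult_left_mono) auto
      finally show ?thesis by simp
    qed
    finally have "(- B * c) * c \<le> (\<bar>g\<bar> + A) * c" by (simp add: power2_eq_square algebra_simps)
    then have "- B * c \<le> \<bar>g\<bar> + A" using c1 mult_le_cancel_right_pos[of c "- B * c" "\<bar>g\<bar> + A"] by simp
    then show ?thesis unfolding C0_def c_def[symmetric] using B by (simp add: field_simps)
  qed
  define M where "M = 2 * C0"
  have bl: "\<bar>lam t\<bar> \<le> M" for t using abs_le_2cosh[of "lam t"] coshb[of t] unfolding M_def by linarith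
  have C0pos: "C0 \<ge> 1" using coshb[of 0] cosh_real_ge_1[of "lam 0"] by linarith
  define P where "P = 1 + 2*(\<bar>g\<bar> + A*C0)"
  have bp: "\<bar>plam t\<bar> \<le> P" for t
  proof -
    define c where "c = cosh (lam t)"
    have "(plam t)^2 = 2*(-g + A*c + B*c^2)" using enl[of t] unfolding Vl_def A_def B_def c_def by simp
    moreover have "B*c^2 \<le> 0" using B by (simp add: mult_nonpos_nonneg)
    moreover have "A*c \<le> A*C0" using A coshb[of t] unfolding c_def by simp
    moreover have "-g \<le> \<bar>g\<bar>" by simp
    ultimately have "(plam t)^2 \<le> 2*(\<bar>g\<bar> + A*C0)" by (simp add: algebra_simps)
    then show ?thesis using abs_le_sq[of "plam t"] unfolding P_def by linarith
  qed
  define K1 where "K1 = A * exp M + 4 * \<bar>B\<bar> * (exp M)^2"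
  define Fl' where "Fl' x = A * cosh x + 2*B*(sinh x * sinh x + cosh x * cosh x)" for x
  have dFl: "(Fl has_real_derivative Fl' x) (at x)" for x
    unfolding Fl_def Fl'_def A_def B_def
    by (rule derivative_eq_intros refl | simp)+ (simp add: algebra_simps)
  have bFl: "\<bar>Fl' x\<bar> \<le> K1" if "\<bar>x\<bar> \<le> M" for x
  proof -
    have e: "exp \<bar>x\<bar> \<le> exp M" using that by simp
    have ch: "cosh x \<le> exp M" "\<bar>sinh x\<bar> \<le> exp M" "cosh x \<ge> 0"
      using cosh_le_exp_abs[of x] sinh_le_exp_abs[of x] e cosh_real_ge_1[of x] by linarith+
    have "\<bar>sinh x * sinh x + cosh x * cosh x\<bar> \<le> exp M * exp M + exp M * exp M"
    proof -
      have "\<bar>sinh x * sinh x\<bar> \<le> exp M * exp M" unfolding abs_mult using ch by (intro mult_mono) auto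
      moreover have "\<bar>cosh x * cosh x\<bar> \<le> exp M * exp M" unfolding abs_mult using ch by (intro mult_mono) auto
      ultimately show ?thesis using abs_triangle_ineq[of "sinh x * sinh x" "cosh x * cosh x"] by linarith
    qed
    then have "\<bar>B\<bar> * \<bar>sinh x * sinh x + cosh x * cosh x\<bar> \<le> \<bar>B\<bar> * (exp M * exp M + exp M * exp M)"
      by (intro mult_left_mono) auto
    then have t2: "\<bar>2*B*(sinh x * sinh x + cosh x * cosh x)\<bar> \<le> 4 * \<bar>B\<bar> * (exp M)^2"
      unfolding abs_mult by (simp add: power2_eq_square algebra_simps)
    have t1: "\<bar>A * cosh x\<bar> \<le> A * exp M" using A ch by (simp add: abs_mult)
    show ?thesis unfolding Fl'_def K1_def using t1 t2
      abs_triangle_ineq[of "A * cosh x" "2*B*(sinh x * sinh x + cosh x * cosh x)"] by linarith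
  qed
  have K1: "K1 \<ge> 0" unfolding K1_def using A by simp
  have lipl: "\<bar>Fl a - Fl b\<bar> \<le> K1 * \<bar>a - b\<bar>" if "\<bar>a\<bar> \<le> M" "\<bar>b\<bar> \<le> M" for a b
    by (rule lip_mvt[OF dFl bFl that])
  have oddl: "Fl (-x) = - Fl x" for x unfolding Fl_def by simp
  have cFl: "isCont Fl x" for x unfolding Fl_def by (intro continuous_intros)
  have cVl: "isCont Vl x" for x unfolding Vl_def by (intro continuous_intros)
  have regl: "p \<noteq> 0 \<or> Fl x \<noteq> 0" if "p^2/2 + Vl x = -g" for x p
  proof -
    have "Hlam d m1 m2 h (x, p) = -g" using that by (simp add: Hlam_def Vl_def)
    then show ?thesis using reg_lam[of d m1 m2 h "-g" x p] torus unfolding regular_torus_def Fl_def by blast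
  qed
  define K2 where "K2 = \<bar>d*(m1-m2)\<bar> + 2*\<bar>h*d^2\<bar>"
  define Gn' where "Gn' v = d*(m1-m2) * sin v - 2 * h * d^2 * (cos v * cos v - sin v * sin v)" for v
  have dGn: "(Gn has_real_derivative Gn' x) (at x)" for x
    unfolding Gn_def Gn'_def
    by (rule derivative_eq_intros refl | simp)+ (simp add: algebra_simps)
  have bGn: "\<bar>Gn' x\<bar> \<le> K2" for x
  proof -
    have s: "\<bar>sin x\<bar> \<le> 1" by (rule abs_sin_le_one)
    have "cos x * cos x - sin x * sin x = cos (2*x)" by (simp add: cos_double power2_eq_square)
    then have cc: "\<bar>cos x * cos x - sin x * sin x\<bar> \<le> 1" by (simp add: abs_cos_le_one)
    have "\<bar>d*(m1-m2) * sin x\<bar> \<le> \<bar>d*(m1-m2)\<bar>"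
      unfolding abs_mult using s by (simp add: mult_left_le)
    moreover have "\<bar>2 * h * d^2 * (cos x * cos x - sin x * sin x)\<bar> \<le> 2*\<bar>h*d^2\<bar>"
    proof -
      have "\<bar>2 * h * d^2\<bar> * \<bar>cos x * cos x - sin x * sin x\<bar> \<le> \<bar>2 * h * d^2\<bar> * 1"
        using cc by (intro mult_left_mono) auto
      then show ?thesis by (simp add: abs_mult)
    qed
    ultimately show ?thesis unfolding Gn'_def K2_def
      using abs_triangle_ineq4[of "d*(m1-m2) * sin x" "2 * h * d^2 * (cos x * cos x - sin x * sin x)"] by linarith
  qed
  have lipn: "\<bar>Gn a - Gn b\<bar> \<le> K2 * \<bar>a - b\<bar>" for a b
    by (rule lip_mvt[OF dGn, of "max \<bar>a\<bar> \<bar>b\<bar>"]) (use bGn in auto)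
  have K2: "K2 \<ge> 0" unfolding K2_def by simp
  have symn: "Gn (2*c - x) = - Gn x" if "cos c = 0" for c x
    unfolding Gn_def using cos_refl[OF that, of x] sin_refl[OF that, of x] by simp
  have syz12: "lam t \<noteq> 0 \<and> cos (nu t) = 0" if "syzygy lam nu t \<in> {Some 1, Some 2}" for t
  proof -
    have "lam t \<noteq> 0 \<and> (sin (nu t) = -1 \<or> sin (nu t) = 1)"
      using that unfolding syzygy_def by (auto split: if_splits)
    moreover have "(cos (nu t))^2 = 1 - (sin (nu t))^2" by (rule cos_squared_eq)
    ultimately show ?thesis by auto
  qed
  have t1c: "lam t1 \<noteq> 0" "cos (nu t1) = 0" using syz12 hyps(2) by auto
  have t2c: "lam t2 \<noteq> 0" "cos (nu t2) = 0" using syz12 hyps(3) by auto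
  have betw: "cos (nu t) \<noteq> 0" if "t1 < t" "t < t2" for t
  proof
    assume c0: "cos (nu t) = 0"
    then have l0: "lam t \<noteq> 0" using nc unfolding non_collision_def by auto
    have "(sin (nu t))^2 = 1" using sin_squared_eq[of "nu t"] c0 by simp
    then have "sin (nu t) = 1 \<or> sin (nu t) = -1" by (simp add: power2_eq_1_iff)
    then have "syzygy lam nu t \<in> {Some 1, Some 2}" using l0 c0 unfolding syzygy_def by auto
    then show False using hyps(4) that by auto
  qed
  have S3: "{t. t1 < t \<and> t < t2 \<and> syzygy lam nu t = Some 3} = {t. t1 < t \<and> t < t2 \<and> lam t = 0}"
  proof (intro set_eqI iffI)
    fix t assume "t \<in> {t. t1 < t \<and> t < t2 \<and> syzygy lam nu t = Some 3}"
    then show "t \<in> {t. t1 < t \<and> t < t2 \<and> lam t = 0}" unfolding syzygy_def by (auto split: if_splits)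
  next
    fix t assume "t \<in> {t. t1 < t \<and> t < t2 \<and> lam t = 0}"
    then show "t \<in> {t. t1 < t \<and> t < t2 \<and> syzygy lam nu t = Some 3}"
      using betw unfolding syzygy_def by auto
  qed
  obtain s0 where s0: "lam s0 = 0" using hyps(5) unfolding S3 by auto
  obtain \<delta> where \<delta>: "\<delta> > 0" "\<And>t. lam t = 0 \<longleftrightarrow> (\<exists>k::int. t = s0 + of_int k * \<delta>)"
      "Tlam lam plam = 2*\<delta>"
    using lam_main[of lam plam Fl Vl "-g" M P K1 s0, OF derl enl bl bp lipl K1 oddl cFl cVl regl s0] by blast
  have pn0: "pnu t1 \<noteq> 0"
    using reg_nu[of d m1 m2 h g "nu t1" "pnu t1"] torus enn[of t1] t1c(2) unfolding regular_torus_def by auto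
  have Tn: "Tnu nu pnu = 2*(t2 - t1)"
    by (rule nu_main[OF dern lipn K2 symn hyps(1) t1c(2) t2c(2) betw pn0])
  have rot: "rotation_number lam plam nu pnu = (t2 - t1)/\<delta>"
    unfolding rotation_number_def Tn \<delta>(3) using \<delta>(1) by (simp add: field_simps)
  have S3': "{t. t1 < t \<and> t < t2 \<and> syzygy lam nu t = Some 3} =
      {t. t1 < t \<and> t < t2 \<and> (\<exists>k::int. t = s0 + of_int k * \<delta>)}"
    unfolding S3 using \<delta>(2) by auto
  have nt: "s0 + of_int k * \<delta> \<noteq> t1" "s0 + of_int k * \<delta> \<noteq> t2" for k :: int
    using \<delta>(2)[of t1] \<delta>(2)[of t2] t1c(1) t2c(1) by auto
  show ?thesis unfolding S3' rot by (rule count_lemma[OF \<delta>(1) hyps(1) nt])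
qed

end
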